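(* Let $G=(N,A)$ be an $s$-$t$ directed graph, let $u,v\in N$ and let $k$ be a positive integer. If $u$ is the $k$-th ancestor of $v$ in the $s$-dominator tree of $G$, then $\mathrm{dom}_t(u,k)$ $t$-dominates $v$, and $v$ does not $t$-dominate $u$ unless $v=\mathrm{dom}_t(u,k)$.
   Context: An $s$-$t$ directed graph is a directed graph (not necessarily acyclic) with a unique source $s$ and unique sink $t$ such that every node is reachable from $s$ and every node reaches $t$. A node $u$ $s$-dominates $v$ if every $s$-$v$ path contains $u$ (every node $s$-dominates itself; strictly if $u\neq v$); a node $w$ $t$-dominates $v$ if every $v$-$t$ path contains $w$. For $v\ne s$ the immediate $s$-dominator of $v$ is the strict $s$-dominator of $v$ that is $s$-dominated by all strict $s$-dominators of $v$; the $s$-dominator tree is rooted at $s$ with the parent of each node being its immediate $s$-dominator. Immediate $t$-dominators and the $t$-dominator tree (rooted at $t$) are defined symmetrically. $\mathrm{dom}_t(u,k)$ denotes the $k$-th ancestor of $u$ in the $t$-dominator tree if $u$ has at least $k$ strict ancestors there, and $t$ otherwise (formally $\mathrm{dom}_t(u,1)$ is the immediate $t$-dominator of $u$ and $\mathrm{dom}_t(u,k)=\mathrm{dom}_t(\mathrm{dom}_t(u,1),k-1)$, defaulting to $t$). *)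

theory Defs
  imports Main
begin

definition is_path :: "('a \<times> 'a) set \<Rightarrow> 'a \<Rightarrow> 'a \<Rightarrow> 'a list \<Rightarrow> bool" where
  "is_path A x y p \<longleftrightarrow> p \<noteq> [] \<and> hd p = x \<and> last p = y \<and>
     (\<forall>i. Suc i < length p \<longrightarrow> (p ! i, p ! Suc i) \<in> A)"

definition reaches :: "('a \<times> 'a) set \<Rightarrow> 'a \<Rightarrow> 'a \<Rightarrow> bool" where
  "reaches A x y \<longleftrightarrow> (\<exists>p. is_path A x y p)"

definition st_graph :: "'a set \<Rightarrow> ('a \<times> 'a) set \<Rightarrow> 'a \<Rightarrow> 'a \<Rightarrow> bool" where
  "st_graph N A s t \<longleftrightarrow> finite N \<and> A \<subseteq> N \<times> N \<and> s \<in> N \<and> t \<in> N \<and>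
     {x \<in> N. \<forall>y. (y, x) \<notin> A} = {s} \<and>
     {x \<in> N. \<forall>y. (x, y) \<notin> A} = {t} \<and>
     (\<forall>v\<in>N. reaches A s v \<and> reaches A v t)"

definition sdom :: "('a \<times> 'a) set \<Rightarrow> 'a \<Rightarrow> 'a \<Rightarrow> 'a \<Rightarrow> bool" where
  "sdom A s u v \<longleftrightarrow> (\<forall>p. is_path A s v p \<longrightarrow> u \<in> set p)"

definition tdom :: "('a \<times> 'a) set \<Rightarrow> 'a \<Rightarrow> 'a \<Rightarrow> 'a \<Rightarrow> bool" where
  "tdom A t w v \<longleftrightarrow> (\<forall>p. is_path A v t p \<longrightarrow> w \<in> set p)"

definition idom_s :: "'a set \<Rightarrow> ('a \<times> 'a) set \<Rightarrow> 'a \<Rightarrow> 'a \<Rightarrow> 'a" where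
  "idom_s N A s v = (THE u. u \<in> N \<and> u \<noteq> v \<and> sdom A s u v \<and>
      (\<forall>w\<in>N. w \<noteq> v \<and> sdom A s w v \<longrightarrow> sdom A s w u))"

definition idom_t :: "'a set \<Rightarrow> ('a \<times> 'a) set \<Rightarrow> 'a \<Rightarrow> 'a \<Rightarrow> 'a" where
  "idom_t N A t v = (THE w. w \<in> N \<and> w \<noteq> v \<and> tdom A t w v \<and>
      (\<forall>x\<in>N. x \<noteq> v \<and> tdom A t x v \<longrightarrow> tdom A t x w))"

text \<open>s_anc N A s k v u: u is the k-th ancestor of v in the s-dominator tree
  (rooted at s, parent = immediate s-dominator).\<close>
fun s_anc :: "'a set \<Rightarrow> ('a \<times> 'a) set \<Rightarrow> 'a \<Rightarrow> nat \<Rightarrow> 'a \<Rightarrow> 'a \<Rightarrow> bool" where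
  "s_anc N A s 0 v u \<longleftrightarrow> u = v"
| "s_anc N A s (Suc k) v u \<longleftrightarrow> v \<noteq> s \<and> s_anc N A s k (idom_s N A s v) u"

text \<open>dom_t(u,k): k-th ancestor of u in the t-dominator tree, defaulting to t.\<close>
fun dom_t :: "'a set \<Rightarrow> ('a \<times> 'a) set \<Rightarrow> 'a \<Rightarrow> 'a \<Rightarrow> nat \<Rightarrow> 'a" where
  "dom_t N A t u 0 = u"
| "dom_t N A t u (Suc k) = (if u = t then t else dom_t N A t (idom_t N A t u) k)"

end

theory Submission
  imports Defs
begin


lemma P_single: "is_path A x x [x]"
  by (simp add: is_path_def)

lemma P_hd: "is_path A x y p \<Longrightarrow> x \<in> set p"
  by (auto simp: is_path_def)

lemma P_last: "is_path A x y p \<Longrightarrow> y \<in> set p"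
  by (auto simp: is_path_def)

lemma P_take: "is_path A x z p \<Longrightarrow> i < length p \<Longrightarrow> is_path A x (p!i) (take (Suc i) p)"
  unfolding is_path_def
  by (auto simp: hd_conv_nth last_conv_nth)

lemma P_drop: "is_path A x z p \<Longrightarrow> i < length p \<Longrightarrow> is_path A (p!i) z (drop i p)"
  unfolding is_path_def
  by (auto simp: hd_drop_conv_nth)

lemma P_app: assumes "is_path A x y p" "is_path A y z q" shows "is_path A x z (p @ tl q)"
proof -
  have p: "p \<noteq> []" "hd p = x" "last p = y" "\<And>i. Suc i < length p \<Longrightarrow> (p ! i, p ! Suc i) \<in> A"
    using assms(1) by (auto simp: is_path_def)
  have q: "q \<noteq> []" "hd q = y" "last q = z" "\<And>i. Suc i < length q \<Longrightarrow> (q ! i, q ! Suc i) \<in> A"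
    using assms(2) by (auto simp: is_path_def)
  have qq: "q = y # tl q" using q by (metis list.collapse)
  have "p @ tl q \<noteq> []" using p by simp
  moreover have "hd (p @ tl q) = x" using p by simp
  moreover have "last (p @ tl q) = z" using p q qq
    by (metis last_ConsL last_ConsR last_appendL last_appendR)
  moreover have "(\<forall>i. Suc i < length (p @ tl q) \<longrightarrow> ((p @ tl q) ! i, (p @ tl q) ! Suc i) \<in> A)"
  proof (intro allI impI)
    fix i assume i: "Suc i < length (p @ tl q)"
    show "((p @ tl q) ! i, (p @ tl q) ! Suc i) \<in> A"
    proof (cases "Suc i < length p")
      case True then show ?thesis using p(4)[OF True] by (simp add: nth_append)
    next
      case False
      hence ge: "i \<ge> length p - 1" by simp
      show ?thesis
      proof (cases "i = length p - 1")
        case True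
        have "(p @ tl q) ! i = y" using p True
          by (simp add: nth_append last_conv_nth)
        moreover have "Suc 0 < length q" using i True p by simp
        moreover from this have "(p @ tl q) ! Suc i = q ! 1" using True p
          by (cases q) (auto simp: nth_append)
        moreover have "y = q ! 0" using q by (simp add: hd_conv_nth)
        ultimately show ?thesis using q(4)[of 0] by simp
      next
        case F2: False
        hence "i \<ge> length p" using ge by simp
        then show ?thesis using q(4)[of "i - length p + 1"] i
          by (simp add: nth_append nth_tl Suc_diff_le)
      qed
    qed
  qed
  ultimately show ?thesis by (simp add: is_path_def)
qed

lemma P_simple: "is_path A x y p \<Longrightarrow> \<exists>q. is_path A x y q \<and> distinct q \<and> set q \<subseteq> set p"
proof (induction "length p" arbitrary: p rule: less_induct)
  case less
  show ?case
  proof (cases "distinct p")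
    case True then show ?thesis using less.prems by blast
  next
    case False
    then obtain i j where ij: "i < j" "j < length p" "p ! i = p ! j"
      by (metis distinct_conv_nth linorder_neqE_nat)
    define p' where "p' = take (Suc i) p @ tl (drop j p)"
    have "is_path A x y p'" unfolding p'_def
      using P_app[OF P_take[OF less.prems, of i] P_drop[OF less.prems ij(2), unfolded ij(3)[symmetric]]] ij by simp
    moreover have "length p' < length p" unfolding p'_def using ij by simp
    moreover have "set p' \<subseteq> set p"
    proof -
      have "set (tl (drop j p)) \<subseteq> set (drop j p)" by (cases "drop j p") auto
      also have "\<dots> \<subseteq> set p" by (rule set_drop_subset)
      finally have "set (tl (drop j p)) \<subseteq> set p" .
      then show ?thesis using set_take_subset[of "Suc i" p] unfolding p'_def by auto
    qed
    ultimately show ?thesis using less(1) by (meson order_trans)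
  qed
qed

lemma P_rev: "is_path A x y p \<Longrightarrow> is_path (A\<inverse>) y x (rev p)"
  unfolding is_path_def
proof (intro conjI allI impI; (elim conjE)?)
  fix i assume h: "p \<noteq> []" "hd p = x" "last p = y" "\<forall>i. Suc i < length p \<longrightarrow> (p ! i, p ! Suc i) \<in> A"
    "Suc i < length (rev p)"
  define j where "j = length p - Suc (Suc i)"
  have "Suc j < length p" "Suc j = length p - Suc i" using h(5) unfolding j_def by auto
  then have "(p ! j, p ! (length p - Suc i)) \<in> A" using h(4) by metis
  then show "(rev p ! i, rev p ! Suc i) \<in> A\<inverse>" using h(5)
    by (simp add: rev_nth j_def)
qed (auto simp: hd_rev last_rev)

lemma P_rev_iff: "is_path (A\<inverse>) y x p \<longleftrightarrow> is_path A x y (rev p)"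
  using P_rev[of "A\<inverse>" y x p] P_rev[of A x y "rev p"] by auto

lemma P_set: "is_path A x y p \<Longrightarrow> A \<subseteq> N \<times> N \<Longrightarrow> x \<in> N \<Longrightarrow> set p \<subseteq> N"
  unfolding is_path_def
proof (intro subsetI)
  fix z assume h: "p \<noteq> [] \<and> hd p = x \<and> last p = y \<and> (\<forall>i. Suc i < length p \<longrightarrow> (p ! i, p ! Suc i) \<in> A)"
    "A \<subseteq> N \<times> N" "x \<in> N" "z \<in> set p"
  then obtain i where i: "i < length p" "p ! i = z" by (metis in_set_conv_nth)
  show "z \<in> N"
  proof (cases i)
    case 0 then show ?thesis using h i by (metis hd_conv_nth)
  next
    case (Suc m) then show ?thesis using h i by force
  qed
qed



lemma distinct_take_idx: "distinct q \<Longrightarrow> i < length q \<Longrightarrow> q ! i \<in> set (take n q) \<Longrightarrow> i < n"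
  by (smt (verit) in_set_conv_nth length_take min_less_iff_conj nth_eq_iff_index_eq nth_take)

lemma distinct_drop_idx: "distinct q \<Longrightarrow> i < length q \<Longrightarrow> q ! i \<in> set (drop n q) \<Longrightarrow> n \<le> i"
proof -
  assume a: "distinct q" "i < length q" "q ! i \<in> set (drop n q)"
  then obtain m where m: "m < length (drop n q)" "drop n q ! m = q ! i" by (metis in_set_conv_nth)
  then have "q ! (n + m) = q ! i" "n + m < length q" by auto
  then have "n + m = i" using a nth_eq_iff_index_eq by blast
  then show ?thesis by simp
qed

locale rg =
  fixes N :: "'a set" and A :: "('a \<times> 'a) set" and r :: 'a
  assumes fin: "finite N" and sub: "A \<subseteq> N \<times> N" and rN: "r \<in> N"
    and reach: "\<forall>x\<in>N. reaches A r x"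
begin

abbreviation D where "D x y \<equiv> sdom A r x y"
abbreviation idm where "idm \<equiv> idom_s N A r"

lemma D_refl: "D y y"
  unfolding sdom_def using P_last by fast

lemma D_root: "D r y"
  unfolding sdom_def using P_hd by fast

lemma D_r: "D x r \<Longrightarrow> x = r"
  unfolding sdom_def using P_single[of A r] by auto

lemma D_trans: assumes "D x y" "D y z" shows "D x z"
  unfolding sdom_def
proof (intro allI impI)
  fix p assume p: "is_path A r z p"
  then have "y \<in> set p" using assms(2) by (auto simp: sdom_def)
  then obtain i where i: "i < length p" "p ! i = y" by (metis in_set_conv_nth)
  have "is_path A r y (take (Suc i) p)" using P_take[OF p i(1)] i by simp
  then have "x \<in> set (take (Suc i) p)" using assms(1) by (auto simp: sdom_def)
  then show "x \<in> set p" by (meson in_set_takeD)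
qed

lemma path_ex: "y \<in> N \<Longrightarrow> \<exists>p. is_path A r y p \<and> distinct p"
proof -
  assume "y \<in> N"
  then obtain p where "is_path A r y p" using reach unfolding reaches_def by blast
  from P_simple[OF this] show ?thesis by blast
qed

lemma D_antisym: assumes "y \<in> N" "D x y" "D y x" shows "x = y"
proof -
  obtain q where q: "is_path A r y q" "distinct q" using path_ex assms(1) by blast
  have "x \<in> set q" using q assms(2) by (auto simp: sdom_def)
  then obtain i where i: "i < length q" "q ! i = x" by (metis in_set_conv_nth)
  have "is_path A r x (take (Suc i) q)" using P_take[OF q(1) i(1)] i by simp
  then have yin: "y \<in> set (take (Suc i) q)" using assms(3) by (auto simp: sdom_def)
  have ly: "q ! (length q - 1) = y" "length q - 1 < length q" using q(1)
    by (auto simp: is_path_def last_conv_nth)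
  have "length q - 1 < Suc i" using distinct_take_idx[OF q(2) ly(2)] yin ly(1) by simp
  then have "i = length q - 1" using i by simp
  then show ?thesis using i ly by simp
qed

lemma D_total: assumes "v \<in> N" "D a v" "D b v" shows "D a b \<or> D b a"
proof -
  obtain q where q: "is_path A r v q" "distinct q" using path_ex assms(1) by blast
  have "a \<in> set q" "b \<in> set q" using q assms by (auto simp: sdom_def)
  then obtain i j where ij: "i < length q" "q ! i = a" "j < length q" "q ! j = b"
    by (metis in_set_conv_nth)
  have key: "D (q!i) (q!j)" if "i \<le> j" "i < length q" "j < length q" "D (q!i) v" for i j
    unfolding sdom_def
  proof (intro allI impI)
    fix R assume R: "is_path A r (q!j) R"
    have "is_path A r v (R @ tl (drop j q))" using P_app[OF R P_drop[OF q(1) that(3)]] .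
    then have "q ! i \<in> set (R @ tl (drop j q))" using that(4) by (auto simp: sdom_def)
    moreover have "q ! i \<notin> set (tl (drop j q))"
    proof
      assume "q ! i \<in> set (tl (drop j q))"
      then have "q ! i \<in> set (drop (Suc j) q)" by (simp add: drop_Suc tl_drop)
      then have "Suc j \<le> i" by (rule distinct_drop_idx[OF q(2) that(2)])
      then show False using that by simp
    qed
    ultimately show "q ! i \<in> set R" by simp
  qed
  show ?thesis
  proof (cases "i \<le> j")
    case True then show ?thesis using key[of i j] ij assms by simp
  next
    case False then show ?thesis using key[of j i] ij assms by simp
  qed
qed


lemma idom_props: assumes v: "v \<in> N" "v \<noteq> r"
  shows "idm v \<in> N \<and> idm v \<noteq> v \<and> D (idm v) v \<and> (\<forall>w\<in>N. w \<noteq> v \<and> D w v \<longrightarrow> D w (idm v))"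
proof -
  define S where "S = {x \<in> N. x \<noteq> v \<and> D x v}"
  define rk where "rk x = card {y \<in> S. D y x}" for x
  have finS: "finite S" unfolding S_def using fin by simp
  have rS: "r \<in> S" unfolding S_def using rN v D_root by auto
  define mx where "mx = Max (rk ` S)"
  have "mx \<in> rk ` S" unfolding mx_def using finS rS by (intro Max_in) auto
  then obtain m where m: "m \<in> S" "rk m = mx" by auto
  have mge: "rk x \<le> rk m" if "x \<in> S" for x unfolding m(2) mx_def using finS that by simp
  have mmax: "D x m" if x: "x \<in> S" for x
  proof (rule ccontr)
    assume nd: "\<not> D x m"
    have "D x v" "D m v" using x m(1) unfolding S_def by auto
    then have "D m x" using D_total[OF v(1)] nd by blast
    have "{y \<in> S. D y m} \<subset> {y \<in> S. D y x}"
      using D_trans[OF _ \<open>D m x\<close>] nd x D_refl by blast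
    then have "rk m < rk x" unfolding rk_def using finS by (intro psubset_card_mono) auto
    then show False using mge[OF x] by simp
  qed
  let ?P = "\<lambda>u. u \<in> N \<and> u \<noteq> v \<and> D u v \<and> (\<forall>w\<in>N. w \<noteq> v \<and> D w v \<longrightarrow> D w u)"
  have Pm: "?P m" using m(1) mmax unfolding S_def by auto
  have "idm v = m" unfolding idom_s_def
  proof (rule the_equality)
    show "?P m" by (rule Pm)
  next
    fix y assume "?P y"
    then have "D m y" "D y m" "m \<in> N" using Pm by auto
    then show "y = m" using D_antisym by blast
  qed
  then show ?thesis using Pm by simp
qed

definition anc where "anc v i = (idm ^^ i) v"
definition valid where "valid v i \<longleftrightarrow> (\<forall>i'<i. anc v i' \<noteq> r)"

lemma anc_0[simp]: "anc v 0 = v" by (simp add: anc_def)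
lemma anc_Suc: "anc v (Suc i) = idm (anc v i)" by (simp add: anc_def)
lemma anc_Suc2: "anc v (Suc i) = anc (idm v) i" by (simp add: anc_def funpow_Suc_right del: funpow.simps)

lemma G2: assumes "v \<in> N" "valid v i"
  shows "anc v i \<in> N \<and> (\<forall>i'\<le>i. D (anc v i) (anc v i'))"
  using assms(2)
proof (induction i)
  case 0 then show ?case using assms(1) D_refl by simp
next
  case (Suc i)
  then have vi: "valid v i" "anc v i \<noteq> r" unfolding valid_def by auto
  then have IH: "anc v i \<in> N" "\<forall>i'\<le>i. D (anc v i) (anc v i')" using Suc.IH by auto
  have ip: "anc v (Suc i) \<in> N" "D (anc v (Suc i)) (anc v i)"
    using idom_props[OF IH(1) vi(2)] anc_Suc by auto
  show ?case
  proof (intro conjI allI impI)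
    fix i' assume "i' \<le> Suc i"
    then show "D (anc v (Suc i)) (anc v i')"
      using IH(2) ip(2) D_trans D_refl le_Suc_eq by metis
  qed (rule ip(1))
qed

lemma G2b: assumes "v \<in> N" "valid v i" "i' < i"
  shows "\<not> D (anc v i') (anc v i)" "anc v i \<noteq> anc v i'"
proof -
  have vi: "valid v (Suc i')" "anc v i' \<noteq> r" using assms unfolding valid_def by auto
  have N1: "anc v i' \<in> N" using G2[OF assms(1), of i'] assms unfolding valid_def by auto
  have ip: "anc v (Suc i') \<noteq> anc v i'" "D (anc v (Suc i')) (anc v i')"
    using idom_props[OF N1 vi(2)] anc_Suc by auto
  have d: "D (anc v i) (anc v (Suc i'))" using G2[OF assms(1,2)] assms(3) by auto
  show nd: "\<not> D (anc v i') (anc v i)"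
  proof
    assume "D (anc v i') (anc v i)"
    then have "D (anc v i') (anc v (Suc i'))" using d D_trans by blast
    then show False using D_antisym[OF N1 ip(2)] ip(1) by blast
  qed
  show "anc v i \<noteq> anc v i'" using nd D_refl by metis
qed

lemma G1: assumes "x \<in> N" "y \<in> N" "D x y" shows "\<exists>i. valid y i \<and> anc y i = x"
  using assms(2,3)
proof (induction "card {z\<in>N. D z y}" arbitrary: y rule: less_induct)
  case less
  show ?case
  proof (cases "x = y")
    case True then show ?thesis by (intro exI[of _ 0]) (simp add: valid_def)
  next
    case False
    have yr: "y \<noteq> r" using False less.prems D_r by blast
    note ip = idom_props[OF less.prems(1) yr]
    have Dx: "D x (idm y)" using ip assms(1) False less.prems(2) by blast
    have "{z\<in>N. D z (idm y)} \<subset> {z\<in>N. D z y}"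
    proof
      show "{z\<in>N. D z (idm y)} \<subseteq> {z\<in>N. D z y}" using ip D_trans by blast
      have "\<not> D y (idm y)" using ip D_antisym[OF less.prems(1)] by metis
      then show "{z\<in>N. D z (idm y)} \<noteq> {z\<in>N. D z y}" using less.prems(1) D_refl by blast
    qed
    then have "card {z\<in>N. D z (idm y)} < card {z\<in>N. D z y}" using fin by (intro psubset_card_mono) auto
    then obtain i where i: "valid (idm y) i" "anc (idm y) i = x" using less.hyps ip Dx by blast
    have "valid y (Suc i)" unfolding valid_def
    proof (intro allI impI)
      fix i' assume "i' < Suc i"
      then show "anc y i' \<noteq> r" using i(1) yr unfolding valid_def
        by (cases i') (auto simp: anc_Suc2)
    qed
    then show ?thesis using i(2) anc_Suc2 by blast
  qed
qed


lemma valid_Suc2: "valid v (Suc k) \<longleftrightarrow> v \<noteq> r \<and> valid (idm v) k"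
  unfolding valid_def All_less_Suc2 by (simp add: anc_Suc2)

lemma valid_mono: "valid v i \<Longrightarrow> i' \<le> i \<Longrightarrow> valid v i'"
  unfolding valid_def by auto

end


lemma tdom_eq: "tdom A t = sdom (A\<inverse>) t"
proof (intro ext)
  fix w v
  show "tdom A t w v = sdom (A\<inverse>) t w v"
    unfolding tdom_def sdom_def P_rev_iff
    by (metis rev_rev_ident set_rev)
qed

lemma idom_t_eq: "idom_t N A t = idom_s N (A\<inverse>) t"
  unfolding idom_t_def idom_s_def tdom_eq by (rule refl)

context rg begin
lemma s_anc_iff: "s_anc N A r k v u \<longleftrightarrow> valid v k \<and> anc v k = u"
proof (induction k arbitrary: v)
  case 0 then show ?case by (auto simp: valid_def)
next
  case (Suc k) then show ?case by (simp add: valid_Suc2 anc_Suc2)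
qed

lemma dom_t_iff: "dom_t N (A\<inverse>) r u j = (if valid u j then anc u j else r)"
proof (induction j arbitrary: u)
  case 0 then show ?case by (auto simp: valid_def)
next
  case (Suc j) then show ?case by (simp add: valid_Suc2 anc_Suc2 idom_t_eq)
qed
end


lemma set_tl_sub: "set (tl xs) \<subseteq> set xs" by (cases xs) auto

lemma lemA:
  assumes P: "is_path A s v P" "distinct P"
    and suv: "sdom A s u v" and wu: "w \<noteq> u" and tw: "tdom A t w u"
    and Q: "is_path A v t Q" "w \<notin> set Q"
  shows "\<exists>i j. i < j \<and> j < length P \<and> P ! i = u \<and> P ! j = w"
proof -
  have "u \<in> set P" using P suv by (auto simp: sdom_def)
  then obtain i where i: "i < length P" "P ! i = u" by (metis in_set_conv_nth)
  have "is_path A u t (drop i P @ tl Q)" using P_app[OF P_drop[OF P(1) i(1)] Q(1)] i by simp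
  then have "w \<in> set (drop i P @ tl Q)" using tw by (auto simp: tdom_def)
  moreover have "w \<notin> set (tl Q)" using Q(2) set_tl_sub by fast
  ultimately have "w \<in> set (drop i P)" by auto
  then obtain m where m: "m < length (drop i P)" "drop i P ! m = w" by (metis in_set_conv_nth)
  have "m \<noteq> 0"
  proof
    assume "m = 0" then have "w = u" using m i by simp
    then show False using wu by simp
  qed
  then show ?thesis using m i by (intro exI[of _ i] exI[of _ "i + m"]) auto
qed

lemma lemA2:
  assumes vN: "\<exists>P. is_path A s v P"
    and suv: "sdom A s u v" and wu: "w \<noteq> u" and tw: "tdom A t w u"
    and ntw: "\<not> tdom A t w v"
  shows "sdom A s w v \<and> w \<noteq> v \<and> \<not> sdom A s w u"
proof -
  obtain Q where Q: "is_path A v t Q" "w \<notin> set Q" using ntw by (auto simp: tdom_def)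
  have wv: "w \<noteq> v" using P_hd[OF Q(1)] Q(2) by auto
  have swv: "sdom A s w v" unfolding sdom_def
  proof (intro allI impI)
    fix P' assume "is_path A s v P'"
    from P_simple[OF this] obtain P where P: "is_path A s v P" "distinct P" "set P \<subseteq> set P'" by blast
    then obtain i j where "j < length P" "P ! j = w" using lemA[OF P(1,2) suv wu tw Q] by blast
    then show "w \<in> set P'" using P(3) nth_mem by blast
  qed
  obtain P0 where "is_path A s v P0" using vN by blast
  from P_simple[OF this] obtain P where P: "is_path A s v P" "distinct P" by blast
  obtain i j where ij: "i < j" "j < length P" "P ! i = u" "P ! j = w"
    using lemA[OF P(1,2) suv wu tw Q] by blast
  have "is_path A s u (take (Suc i) P)" using P_take[OF P(1), of i] ij by simp
  moreover have "w \<notin> set (take (Suc i) P)"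
  proof
    assume "w \<in> set (take (Suc i) P)"
    then have "j < Suc i" using distinct_take_idx[OF P(2) ij(2)] ij(4) by simp
    then show False using ij by simp
  qed
  ultimately have "\<not> sdom A s w u" by (auto simp: sdom_def)
  then show ?thesis using wv swv by simp
qed

lemma lemB:
  assumes tvu: "tdom A t v u" and sxv: "sdom A s x v" and nsxu: "\<not> sdom A s x u"
    and xv: "x \<noteq> v" and ut: "\<exists>R. is_path A u t R"
  shows "tdom A t x u \<and> tdom A t v x"
proof -
  obtain p0 where p0: "is_path A s u p0" "x \<notin> set p0" using nsxu by (auto simp: sdom_def)
  have txu: "tdom A t x u" unfolding tdom_def
  proof (intro allI impI)
    fix R assume R: "is_path A u t R"
    then have "v \<in> set R" using tvu by (auto simp: tdom_def)
    then obtain j where j: "j < length R" "R ! j = v" by (metis in_set_conv_nth)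
    have "is_path A s v (p0 @ tl (take (Suc j) R))" using P_app[OF p0(1) P_take[OF R j(1)]] j by simp
    then have "x \<in> set (p0 @ tl (take (Suc j) R))" using sxv by (auto simp: sdom_def)
    then have "x \<in> set (tl (take (Suc j) R))" using p0(2) by auto
    then show "x \<in> set R" using set_tl_sub[of "take (Suc j) R"] set_take_subset[of "Suc j" R] by blast
  qed
  obtain R0 where "is_path A u t R0" using ut by blast
  from P_simple[OF this] obtain R where R: "is_path A u t R" "distinct R" by blast
  have "x \<in> set R" "v \<in> set R" using R txu tvu by (auto simp: tdom_def)
  then obtain i j where ij: "i < length R" "R ! i = x" "j < length R" "R ! j = v"
    by (metis in_set_conv_nth)
  have "i \<noteq> j" using ij xv by auto
  have ilj: "i < j"
  proof (rule ccontr)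
    assume "\<not> i < j"
    then have "j < i" using \<open>i \<noteq> j\<close> by simp
    have pv: "is_path A s v (p0 @ tl (take (Suc j) R))" using P_app[OF p0(1) P_take[OF R(1) ij(3)]] ij by simp
    have "x \<notin> set (take (Suc j) R)"
    proof
      assume "x \<in> set (take (Suc j) R)"
      then have "i < Suc j" using distinct_take_idx[OF R(2) ij(1)] ij(2) by simp
      then show False using \<open>j < i\<close> by simp
    qed
    then have "x \<notin> set (p0 @ tl (take (Suc j) R))" using p0(2) set_tl_sub[of "take (Suc j) R"]
      by auto
    then show False using pv sxv by (auto simp: sdom_def)
  qed
  have tvx: "tdom A t v x" unfolding tdom_def
  proof (intro allI impI)
    fix Q assume Q: "is_path A x t Q"
    have "is_path A u t (take (Suc i) R @ tl Q)" using P_app[OF P_take[OF R(1) ij(1), unfolded ij(2)] Q] ij by simp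
    then have "v \<in> set (take (Suc i) R @ tl Q)" using tvu by (auto simp: tdom_def)
    moreover have "v \<notin> set (take (Suc i) R)"
    proof
      assume "v \<in> set (take (Suc i) R)"
      then have "j < Suc i" using distinct_take_idx[OF R(2) ij(3)] ij(4) by simp
      then show False using ilj by simp
    qed
    ultimately have "v \<in> set (tl Q)" by auto
    then show "v \<in> set Q" using set_tl_sub by fast
  qed
  show ?thesis using txu tvx by simp
qed


theorem lemma3:
  fixes N :: "'a set" and A :: "('a \<times> 'a) set" and s t u v :: 'a and k :: nat
  assumes "st_graph N A s t"
    and "u \<in> N" and "v \<in> N"
    and "k > 0"
    and "s_anc N A s k v u"
  shows "tdom A t (dom_t N A t u k) v \<and>
         (tdom A t v u \<longrightarrow> v = dom_t N A t u k)"
proof -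
  note uN = assms(2) and vN = assms(3) and kpos = assms(4)
  have g: "finite N" "A \<subseteq> N \<times> N" "s \<in> N" "t \<in> N" "\<forall>x\<in>N. reaches A s x \<and> reaches A x t"
    using assms(1) unfolding st_graph_def by auto
  interpret S: rg N A s
    by (rule rg.intro) (use g in \<open>auto simp: reaches_def\<close>)
  have rev_reach: "reaches (A\<inverse>) t x" if "x \<in> N" for x
  proof -
    have "reaches A x t" using g(5) that by simp
    then obtain p where "is_path A x t p" unfolding reaches_def by (elim exE)
    from P_rev[OF this] show ?thesis unfolding reaches_def by (rule exI)
  qed
  interpret T: rg N "A\<inverse>" t
    by (rule rg.intro) (use g rev_reach in auto)
  have td: "tdom A t = sdom (A\<inverse>) t" by (rule tdom_eq)
  have dt: "dom_t N A t u j = (if T.valid u j then T.anc u j else t)" for j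
    using T.dom_t_iff[of u j] by simp
  define a where "a = S.anc v"
  define b where "b = T.anc u"
  have sv: "S.valid v k" "a k = u" using assms(5) S.s_anc_iff a_def by auto
  have sP: "\<exists>P. is_path A s v P" using g(5) vN unfolding reaches_def by blast
  have tP: "\<exists>R. is_path A u t R" using g(5) uN unfolding reaches_def by blast
  have aN: "a i \<in> N" "sdom A s (a i) v" if "i \<le> k" for i
    using S.G2[OF vN S.valid_mono[OF sv(1) that]] unfolding a_def by auto
  have uv: "u \<noteq> v" using S.G2b(2)[OF vN sv(1) kpos] sv(2) a_def by simp
  have suv: "sdom A s u v" using aN[of k] sv(2) by simp
  have tt: "tdom A t t x" for x unfolding tdom_def is_path_def by auto
  have part1: "tdom A t (dom_t N A t u k) v"
  proof (rule ccontr)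
    assume nt: "\<not> tdom A t (dom_t N A t u k) v"
    then have tv: "T.valid u k" using dt[of k] tt by (cases "T.valid u k") auto
    then have dk: "dom_t N A t u k = b k" using dt b_def by simp
    have sub: "b ` {1..k} \<subseteq> a ` {1..k-1}"
    proof
      fix y assume "y \<in> b ` {1..k}"
      then obtain j where j: "j \<in> {1..k}" "y = b j" by auto
      have vj: "T.valid u j" using T.valid_mono[OF tv] j by auto
      have bjN: "b j \<in> N" "sdom (A\<inverse>) t (b j) u" using T.G2[OF uN vj] b_def by auto
      have bju: "b j \<noteq> u" using T.G2b(2)[OF uN vj, of 0] j b_def by auto
      have bkj: "sdom (A\<inverse>) t (b k) (b j)" using T.G2[OF uN tv] j b_def by auto
      have nbj: "\<not> tdom A t (b j) v"
      proof
        assume "tdom A t (b j) v"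
        then have "tdom A t (b k) v" using bkj T.D_trans td by simp
        then show False using nt dk by simp
      qed
      have la: "sdom A s (b j) v \<and> b j \<noteq> v \<and> \<not> sdom A s (b j) u"
        using lemA2[OF sP suv bju _ nbj] bjN td by simp
      then obtain i where i: "S.valid v i" "a i = b j" using S.G1[OF bjN(1) vN] a_def by blast
      have "i \<noteq> 0"
      proof
        assume "i = 0" then have "b j = v" using i a_def by simp
        then show False using la by simp
      qed
      moreover have "i \<noteq> k" using la i sv(2) S.D_refl by auto
      moreover have "\<not> i > k"
      proof
        assume "i > k"
        then have "sdom A s (a i) (a k)" using S.G2[OF vN i(1)] a_def by auto
        then show False using la i sv(2) by simp
      qed
      ultimately have "i \<in> {1..k-1}" by auto
      then show "y \<in> a ` {1..k-1}" using i j by (metis image_eqI)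
    qed
    have inj: "inj_on b {1..k}"
    proof (rule inj_onI)
      fix x y assume xy: "x \<in> {1..k}" "y \<in> {1..k}" "b x = b y"
      show "x = y"
      proof (rule ccontr)
        assume "x \<noteq> y"
        then consider "x < y" | "y < x" by linarith
        then show False
        proof cases
          case 1 then show False using T.G2b(2)[OF uN T.valid_mono[OF tv], of y x] xy b_def by auto
        next
          case 2 then show False using T.G2b(2)[OF uN T.valid_mono[OF tv], of x y] xy b_def by auto
        qed
      qed
    qed
    have "k = card (b ` {1..k})" using card_image[OF inj] by simp
    also have "\<dots> \<le> card (a ` {1..k-1})" using sub by (intro card_mono) auto
    also have "\<dots> \<le> card {1..k-1}" by (rule card_image_le) simp
    finally show False using kpos by simp
  qed
  have part2: "v = dom_t N A t u k" if tvu: "tdom A t v u"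
  proof -
    obtain j where j: "T.valid u j" "b j = v" using T.G1[OF vN uN] tvu td b_def by auto
    have j0: "j \<noteq> 0"
    proof
      assume "j = 0" then have "v = u" using j b_def by simp
      then show False using uv by simp
    qed
    have sub: "a ` {1..k-1} \<subseteq> b ` {1..j-1}"
    proof
      fix y assume "y \<in> a ` {1..k-1}"
      then obtain i where i: "i \<in> {1..k-1}" "y = a i" by auto
      have vi: "S.valid v i" using S.valid_mono[OF sv(1)] i by auto
      have ai: "a i \<in> N" "sdom A s (a i) v" using aN[of i] i by auto
      have ik: "i < k" using i kpos by auto
      have nsu: "\<not> sdom A s (a i) u" using S.G2b(1)[OF vN sv(1) ik] sv(2) a_def by auto
      have aiv: "a i \<noteq> v" using S.G2b(2)[OF vN vi, of 0] i a_def by auto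
      have aiu: "a i \<noteq> u" using S.G2b(2)[OF vN sv(1) ik] sv(2) a_def by auto
      have lb: "tdom A t (a i) u \<and> tdom A t v (a i)" using lemB[OF tvu ai(2) nsu aiv tP] .
      then obtain m where m: "T.valid u m" "b m = a i" using T.G1[OF ai(1) uN] td b_def by auto
      have "m \<noteq> 0"
      proof
        assume "m = 0" then have "a i = u" using m b_def by simp
        then show False using aiu by simp
      qed
      moreover have "m \<noteq> j" using m j aiv by auto
      moreover have "\<not> m > j"
      proof
        assume "m > j"
        then have "sdom (A\<inverse>) t (b m) (b j)" using T.G2[OF uN m(1)] b_def by auto
        then have "sdom (A\<inverse>) t (a i) v" using m j by simp
        moreover have "sdom (A\<inverse>) t v (a i)" using lb td by simp
        ultimately have "v = a i" using T.D_antisym[OF ai(1)] by blast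
        then have "a i = v" by simp
        then show False using aiv by simp
      qed
      ultimately have "m \<in> {1..j-1}" by auto
      then show "y \<in> b ` {1..j-1}" using i m by (metis image_eqI)
    qed
    have inj: "inj_on a {1..k-1}"
    proof (rule inj_onI)
      fix x y assume xy: "x \<in> {1..k-1}" "y \<in> {1..k-1}" "a x = a y"
      have xk: "x \<le> k" "y \<le> k" using xy by auto
      show "x = y"
      proof (rule ccontr)
        assume "x \<noteq> y"
        then consider "x < y" | "y < x" by linarith
        then show False
        proof cases
          case 1 then show False using S.G2b(2)[OF vN S.valid_mono[OF sv(1) xk(2)], of x] xy a_def by auto
        next
          case 2 then show False using S.G2b(2)[OF vN S.valid_mono[OF sv(1) xk(1)], of y] xy a_def by auto
        qed
      qed
    qed
    have "k - 1 = card (a ` {1..k-1})" using card_image[OF inj] by simp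
    also have "\<dots> \<le> card (b ` {1..j-1})" using sub by (intro card_mono) auto
    also have "\<dots> \<le> card {1..j-1}" by (rule card_image_le) simp
    finally have kj: "k \<le> j" using j0 kpos by simp
    have tk: "T.valid u k" using T.valid_mono[OF j(1) kj] .
    have dk: "dom_t N A t u k = b k" using dt tk b_def by simp
    have "k = j"
    proof (rule ccontr)
      assume "k \<noteq> j"
      then have "k < j" using kj by simp
      then have "\<not> sdom (A\<inverse>) t (b k) (b j)" using T.G2b(1)[OF uN j(1)] b_def by auto
      then show False using part1 dk j td by simp
    qed
    then show ?thesis using dk j by simp
  qed
  show ?thesis using part1 part2 by blast
qed

end
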